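(* Let $m\ge2$, $n\ge0$, $0\le k\le n$, input $\rho=|\vec n_0\rangle\langle\vec n_0|$ with $N_0=N(\vec n_0)$, outcome $\vec n$ with $|\vec n|=n$ and $N=N(\vec n)$, and $g\in\mathrm{SU}(m)$. Assuming $s_{\lambda_k}\neq0$, the PNR filter function satisfies $$f_{\lambda_k}(\vec n,g)=\frac{1}{s_{\lambda_k}}(-1)^{\varphi(N_0)+\varphi(N)}\sum_{M\in\mathrm{GT}(\lambda_k)}C^{M}_{N_0,\bar N_0}\sum_{M'\in\mathrm{GT}(\lambda_k)}C^{M'}_{N,\bar N}\,\langle M|\lambda_k(g)^\dagger|M'\rangle,$$ where only zero-weight $M,M'$ contribute.
   Context: Fix integers $m\ge 2$, $n\ge0$. $\mathcal H_n^m$ is the span of Fock states $|\vec n\rangle=|n_1,\dots,n_m\rangle$, $\vec n\in\mathbb N^m$, $\sum_in_i=n$. $\tau_n^m$ is the totally symmetric irrep of $\mathrm{SU}(m)$ on $\mathcal H_n^m$ given by passive transformations; $\bar\tau_n^m$ its complex conjugate in the Fock basis; $\omega_n^m(g)(X)=\tau_n^m(g)X\tau_n^m(g)^\dagger\cong\tau_n^m\otimes\bar\tau_n^m$ via vectorization $|A\rangle\!\rangle=\sum\langle\vec n|A|\vec m\rangle|\vec n\rangle\otimes|\vec m\rangle$. $\lambda_k$ is the irrep with Young diagram $(2k,k,\dots,k,0)$ (first row $2k$ boxes, rows $2,\dots,m-1$ with $k$ boxes, empty last row), $d_{\lambda_k}$ its dimension; $\tau_n^m\otimes\bar\tau_n^m\cong\bigoplus_{k=0}^n\lambda_k$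 multiplicity-free, $P_{\lambda_k}$ is the orthogonal projector onto the $\lambda_k$ component and $\lambda_k(g)$ the action of $g$ on it. Gelfand–Tsetlin (GT) patterns: for an irrep $\lambda=(\lambda_1,\dots,\lambda_m)$, $\lambda_m=0$, a GT pattern $M=(M_{i,j})_{1\le i\le j\le m}$ has $M_{i,m}=\lambda_i$ and $M_{i,j+1}\ge M_{i,j}\ge M_{i+1,j+1}$; $\mathrm{GT}(\lambda)$ is the set of such patterns and $\{|M\rangle\}$ the orthonormal GT basis of $\lambda$ (Condon–Shortley convention). The Fock state $|\vec n\rangle$ is identified with the GT basis vector $|N\rangle$ of $\tau_n^m$ with $N_{1,j}=n_1+\dots+n_j$, $N_{i,j}=0$ for $i\ge2$; write $N=N(\vec n)$. The dual pattern of $M$ is $\bar M_{i,l}:=M_{1,m}-M_{l-i+1,l}$, a GT basis label of the dual irrep. With $s_M(k)=\sum_{j=1}^k\sum_{i=1}^jM_{i,j}$ and $M_{\max}$ the highest-weight pattern ($M_{i,j}=M_{i,m}$), set $\varphi(M):=s_M(m-1)-s_{M_{\max}}(m-1)\in\mathbb Z$; then, regarding the Fock basis vector as a basis vector of $\bar\tau_n^m$, $|N\rangle=(-1)^{\varphi(N)}|\bar N\rangle$. For $N_1,N_2\in\mathrm{GT}(\tau_n^m)$ and $M\in\mathrm{GT}(\lambda_k)$, the real SU($m$) Clebsch–Gordan coefficients are $C^M_{N_1,\bar N_2}:=\langle N_1,\bar N_2|M\rangle$, i.e. $|N_1\rangle\otimes|\bar N_2\rangle=\sum_k\sum_{M\in\mathrm{GT}(\lambda_k)}C^M_{N_1,\bar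 N_2}|M\rangle$; they vanish unless the weight of $M$ is the sum of the weights of $N_1$ and $\bar N_2$. Filter function: for input $\rho=|\vec n_0\rangle\langle\vec n_0|$, $f_{\lambda}(\vec n,g):=s_{\lambda}^{-1}\langle\vec n|\tau_n^m(g)\,[P_{\lambda}(\rho)]\,\tau_n^m(g)^\dagger|\vec n\rangle$, with $s_\lambda:=d_\lambda^{-1}\sum_{\vec n\in\mathbb N^m}\langle\!\langle\vec n,\vec n|P_\lambda|\vec n,\vec n\rangle\!\rangle$. *)

theory Defs
  imports Complex_Main "HOL-Combinatorics.Permutations"
begin

text \<open>Fock states of m modes and n photons: occupation vectors v :: nat => nat,
  mode i (0-based) has v i photons, v i = 0 for i >= m, total n.\<close>

type_synonym fock = "nat \<Rightarrow> nat"
type_synonym op = "fock \<Rightarrow> fock \<Rightarrow> complex"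
type_synonym gtpat = "nat \<Rightarrow> nat \<Rightarrow> nat"   \<comment> \<open>M i j, 1 <= i <= j <= m\<close>

definition comps :: "nat \<Rightarrow> nat \<Rightarrow> fock set" where
  "comps m n = {v. (\<forall>i\<ge>m. v i = 0) \<and> (\<Sum>i<m. v i) = n}"

definition ops :: "nat \<Rightarrow> nat \<Rightarrow> op set" where
  "ops m n = {X. \<forall>a b. a \<notin> comps m n \<or> b \<notin> comps m n \<longrightarrow> X a b = 0}"

definition ketbra :: "fock \<Rightarrow> fock \<Rightarrow> op" where
  "ketbra u v = (\<lambda>a b. if a = u \<and> b = v then 1 else 0)"

definition op_mult :: "nat \<Rightarrow> nat \<Rightarrow> op \<Rightarrow> op \<Rightarrow> op" where
  "op_mult m n X Y = (\<lambda>a b. \<Sum>c\<in>comps m n. X a c * Y c b)"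

definition op_adj :: "op \<Rightarrow> op" where
  "op_adj X = (\<lambda>a b. cnj (X b a))"

definition hs_inner :: "nat \<Rightarrow> nat \<Rightarrow> op \<Rightarrow> op \<Rightarrow> complex" where
  "hs_inner m n X Y = (\<Sum>a\<in>comps m n. \<Sum>b\<in>comps m n. cnj (X a b) * Y a b)"

definition mdet :: "nat \<Rightarrow> (nat \<Rightarrow> nat \<Rightarrow> complex) \<Rightarrow> complex" where
  "mdet m g = (\<Sum>\<sigma> | \<sigma> permutes {..<m}. of_int (sign \<sigma>) * (\<Prod>i<m. g i (\<sigma> i)))"

definition SU :: "nat \<Rightarrow> (nat \<Rightarrow> nat \<Rightarrow> complex) set" where
  "SU m = {g. (\<forall>i j. i \<ge> m \<or> j \<ge> m \<longrightarrow> g i j = 0)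
              \<and> (\<forall>i<m. \<forall>j<m. (\<Sum>l<m. cnj (g l i) * g l j) = (if i = j then 1 else 0))
              \<and> mdet m g = 1}"

definition madj :: "(nat \<Rightarrow> nat \<Rightarrow> complex) \<Rightarrow> (nat \<Rightarrow> nat \<Rightarrow> complex)" where
  "madj g = (\<lambda>i j. cnj (g j i))"

definition modelist :: "nat \<Rightarrow> fock \<Rightarrow> nat list" where
  "modelist m v = concat (map (\<lambda>i. replicate (v i) i) [0..<m])"

definition fact_vec :: "nat \<Rightarrow> fock \<Rightarrow> real" where
  "fact_vec m v = (\<Prod>i<m. fact (v i))"

text \<open>Passive linear-optical transformation tau_n^m(g), defined by
  a_j^dagger |-> sum_i g i j a_i^dagger; its Fock matrix elements are
  <a|tau(g)|b> = per(g[a,b]) / sqrt(a! b!).\<close>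
definition tau :: "nat \<Rightarrow> nat \<Rightarrow> (nat \<Rightarrow> nat \<Rightarrow> complex) \<Rightarrow> op" where
  "tau m n g = (\<lambda>a b. if a \<in> comps m n \<and> b \<in> comps m n then
      (\<Sum>\<sigma> | \<sigma> permutes {..<n}. \<Prod>l<n. g (modelist m a ! l) (modelist m b ! (\<sigma> l)))
        / of_real (sqrt (fact_vec m a * fact_vec m b))
    else 0)"

definition omega :: "nat \<Rightarrow> nat \<Rightarrow> (nat \<Rightarrow> nat \<Rightarrow> complex) \<Rightarrow> op \<Rightarrow> op" where
  "omega m n g X = op_mult m n (op_mult m n (tau m n g) X) (op_adj (tau m n g))"

definition op_span :: "op set \<Rightarrow> op set" where
  "op_span S = {X. \<exists>F c. finite F \<and> F \<subseteq> S \<and> X = (\<lambda>a b. \<Sum>Y\<in>F. c Y * Y a b)}"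

definition is_subsp :: "nat \<Rightarrow> nat \<Rightarrow> op set \<Rightarrow> bool" where
  "is_subsp m n W \<longleftrightarrow> W \<subseteq> ops m n \<and> op_span W = W"

definition invariant :: "nat \<Rightarrow> nat \<Rightarrow> op set \<Rightarrow> bool" where
  "invariant m n W \<longleftrightarrow> is_subsp m n W \<and> (\<forall>g\<in>SU m. \<forall>X\<in>W. omega m n g X \<in> W)"

definition irreducible_inv :: "nat \<Rightarrow> nat \<Rightarrow> op set \<Rightarrow> bool" where
  "irreducible_inv m n W \<longleftrightarrow> invariant m n W \<and> W \<noteq> {\<lambda>a b. 0}
     \<and> (\<forall>V. invariant m n V \<and> V \<subseteq> W \<longrightarrow> V = {\<lambda>a b. 0} \<or> V = W)"

text \<open>Weight spaces of omega for the maximal torus: |a><b| has (gl(m)-)weight a - b.\<close>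
definition wspace :: "nat \<Rightarrow> nat \<Rightarrow> (nat \<Rightarrow> int) \<Rightarrow> op set" where
  "wspace m n \<nu> = {X \<in> ops m n. \<forall>a b. X a b \<noteq> 0 \<longrightarrow> (\<forall>j<m. int (a j) - int (b j) = \<nu> j)}"

definition lex_gt :: "nat \<Rightarrow> (nat \<Rightarrow> int) \<Rightarrow> (nat \<Rightarrow> int) \<Rightarrow> bool" where
  "lex_gt m \<nu> \<mu> \<longleftrightarrow> (\<exists>j<m. (\<forall>i<j. \<nu> i = \<mu> i) \<and> \<nu> j > \<mu> j)"

text \<open>Weights are taken up to adding multiples of (1,...,1), normalised here so that
  they sum to 0 (the gl(m)-weights of operators on H_n^m).\<close>
definition has_hw :: "nat \<Rightarrow> nat \<Rightarrow> op set \<Rightarrow> (nat \<Rightarrow> int) \<Rightarrow> bool" where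
  "has_hw m n W \<mu> \<longleftrightarrow> (\<exists>X\<in>W \<inter> wspace m n \<mu>. X \<noteq> (\<lambda>a b. 0))
     \<and> (\<forall>\<nu>. lex_gt m \<nu> \<mu> \<longrightarrow> W \<inter> wspace m n \<nu> \<subseteq> {\<lambda>a b. 0})"

text \<open>Young diagram lambda_k = (2k, k, ..., k, 0) (rows 1..m) and the same weight
  normalised to sum zero: (k, 0, ..., 0, -k) (indices 0..m-1).\<close>
definition lam :: "nat \<Rightarrow> nat \<Rightarrow> nat \<Rightarrow> nat" where
  "lam m k i = (if i = 1 then 2 * k else if 2 \<le> i \<and> i \<le> m - 1 then k else 0)"

definition lam_wt0 :: "nat \<Rightarrow> nat \<Rightarrow> nat \<Rightarrow> int" where
  "lam_wt0 m k j = int (lam m k (j + 1)) - int k"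

text \<open>The lambda_k component of omega = tau (x) conj tau (isotypic component).\<close>
definition comp :: "nat \<Rightarrow> nat \<Rightarrow> nat \<Rightarrow> op set" where
  "comp m n k = op_span (\<Union>{W. irreducible_inv m n W \<and> has_hw m n W (lam_wt0 m k)})"

definition proj :: "nat \<Rightarrow> nat \<Rightarrow> op set \<Rightarrow> op \<Rightarrow> op" where
  "proj m n W X = (THE Y. Y \<in> W \<and> (\<forall>Z\<in>W. hs_inner m n Z (\<lambda>a b. X a b - Y a b) = 0))"

definition P_lam :: "nat \<Rightarrow> nat \<Rightarrow> nat \<Rightarrow> op \<Rightarrow> op" where
  "P_lam m n k = proj m n (comp m n k)"

definition GT :: "nat \<Rightarrow> (nat \<Rightarrow> nat) \<Rightarrow> gtpat set" where
  "GT m lm = {M. (\<forall>i j. \<not> (1 \<le> i \<and> i \<le> j \<and> j \<le> m) \<longrightarrow> M i j = 0)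
        \<and> (\<forall>i\<in>{1..m}. M i m = lm i)
        \<and> (\<forall>i j. 1 \<le> i \<and> i \<le> j \<and> j < m \<longrightarrow> M i (j + 1) \<ge> M i j \<and> M i j \<ge> M (i + 1) (j + 1))}"

definition rowsum :: "gtpat \<Rightarrow> nat \<Rightarrow> int" where
  "rowsum M j = (\<Sum>i=1..j. int (M i j))"

definition gt_weight :: "gtpat \<Rightarrow> nat \<Rightarrow> int" where
  "gt_weight M j = rowsum M j - rowsum M (j - 1)"

definition zero_weight :: "nat \<Rightarrow> gtpat \<Rightarrow> bool" where
  "zero_weight m M \<longleftrightarrow> (\<forall>j\<in>{1..m}. gt_weight M j = gt_weight M 1)"

definition s_pat :: "gtpat \<Rightarrow> nat \<Rightarrow> int" where
  "s_pat M k = (\<Sum>j=1..k. \<Sum>i=1..j. int (M i j))"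

definition M_max :: "nat \<Rightarrow> gtpat \<Rightarrow> gtpat" where
  "M_max m M = (\<lambda>i j. if 1 \<le> i \<and> i \<le> j \<and> j \<le> m then M i m else 0)"

definition phi :: "nat \<Rightarrow> gtpat \<Rightarrow> int" where
  "phi m M = s_pat M (m - 1) - s_pat (M_max m M) (m - 1)"

definition Npat :: "nat \<Rightarrow> fock \<Rightarrow> gtpat" where
  "Npat m v = (\<lambda>i j. if i = 1 \<and> 1 \<le> j \<and> j \<le> m then (\<Sum>l<j. v l) else 0)"

text \<open>B M is the GT basis vector |M> of lambda_k, as an operator (vectorization inverted).
  Requirements satisfied by the Condon-Shortley GT basis: orthonormal basis of the
  lambda_k component, each |M> a weight vector whose SU(m) weight is that of M, and
  real Clebsch-Gordan coefficients.\<close>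
definition GT_basis :: "nat \<Rightarrow> nat \<Rightarrow> nat \<Rightarrow> (gtpat \<Rightarrow> op) \<Rightarrow> bool" where
  "GT_basis m n k B \<longleftrightarrow>
     (\<forall>M\<in>GT m (lam m k). B M \<in> comp m n k)
   \<and> (\<forall>M\<in>GT m (lam m k). \<forall>M'\<in>GT m (lam m k).
         hs_inner m n (B M) (B M') = (if M = M' then 1 else 0))
   \<and> op_span (B ` GT m (lam m k)) = comp m n k
   \<and> (\<forall>M\<in>GT m (lam m k). \<forall>a b. B M a b \<noteq> 0 \<longrightarrow>
         (\<forall>j<m. gt_weight M (j + 1) = int (a j) - int (b j) + int k))
   \<and> (\<forall>M\<in>GT m (lam m k). \<forall>a b. B M a b \<in> \<real>)"

text \<open>C^M_{N1, bar N2} = <N1, bar N2 | M>, where |N1> (x) |bar N2> = (-1)^phi(N2) |n1> (x) |n2>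
  (vectorization of |n1><n2|).\<close>
definition CG :: "nat \<Rightarrow> (gtpat \<Rightarrow> op) \<Rightarrow> gtpat \<Rightarrow> fock \<Rightarrow> fock \<Rightarrow> complex" where
  "CG m B M n1 n2 = (-1) powi (phi m (Npat m n2)) * B M n1 n2"

text \<open><M| lambda_k(g)^dagger |M'> = conj <M'| lambda_k(g) |M>.\<close>
definition lam_elem_adj :: "nat \<Rightarrow> nat \<Rightarrow> (gtpat \<Rightarrow> op) \<Rightarrow> (nat \<Rightarrow> nat \<Rightarrow> complex) \<Rightarrow> gtpat \<Rightarrow> gtpat \<Rightarrow> complex" where
  "lam_elem_adj m n B g M M' = cnj (hs_inner m n (B M') (omega m n g (B M)))"

definition d_lam :: "nat \<Rightarrow> nat \<Rightarrow> nat" where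
  "d_lam m k = card (GT m (lam m k))"

definition s_lam :: "nat \<Rightarrow> nat \<Rightarrow> nat \<Rightarrow> complex" where
  "s_lam m n k = (1 / of_nat (d_lam m k)) *
     (\<Sum>v\<in>comps m n. hs_inner m n (ketbra v v) (P_lam m n k (ketbra v v)))"

definition filt :: "nat \<Rightarrow> nat \<Rightarrow> nat \<Rightarrow> fock \<Rightarrow> fock \<Rightarrow> (nat \<Rightarrow> nat \<Rightarrow> complex) \<Rightarrow> complex" where
  "filt m n k v0 v g = (1 / s_lam m n k) * omega m n g (P_lam m n k (ketbra v0 v0)) v v"

end

theory Submission imports Defs begin


lemma sign_sq: "(-1::complex) powi (a + b) * (-1) powi a * (-1) powi b = 1"
proof -
  have sq: "((-1::complex) powi c) * (-1) powi c = 1" for c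
  proof -
    have e: "(-1::complex) powi c = (-1) ^ nat \<bar>c\<bar>" by (simp add: power_int_def)
    have "((-1::complex) ^ nat \<bar>c\<bar>) * (-1) ^ nat \<bar>c\<bar> = ((-1) * (-1)) ^ nat \<bar>c\<bar>"
      by (rule power_mult_distrib[symmetric])
    then show ?thesis unfolding e by simp
  qed
  have e2: "(-1::complex) powi (a + b) = (-1) powi a * (-1) powi b" by (rule power_int_add) simp
  have "(-1::complex) powi (a + b) * (-1) powi a * (-1) powi b
     = ((-1) powi a * (-1) powi a) * ((-1) powi b * (-1) powi b)" unfolding e2 by (simp only: mult_ac)
  then show ?thesis using sq[of a] sq[of b] by simp
qed

lemma hs_inner_lc_right:
  "hs_inner m n Z (\<lambda>a b. \<Sum>i\<in>F. c i * X i a b) = (\<Sum>i\<in>F. c i * hs_inner m n Z (X i))"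
  unfolding hs_inner_def
  by (simp add: sum_distrib_left sum.swap[of _ F] mult_ac)

lemma hs_inner_lc_left:
  "hs_inner m n (\<lambda>a b. \<Sum>i\<in>F. c i * X i a b) D = (\<Sum>i\<in>F. cnj (c i) * hs_inner m n (X i) D)"
  unfolding hs_inner_def
  by (simp add: sum_distrib_left sum_distrib_right sum.swap[of _ F] mult_ac)

lemma hs_inner_diff:
  "hs_inner m n Z (\<lambda>a b. P a b - Q a b) = hs_inner m n Z P - hs_inner m n Z Q"
  unfolding hs_inner_def by (simp add: right_diff_distrib sum_subtractf)

lemma omega_lc:
  "omega m n g (\<lambda>a b. \<Sum>i\<in>F. c i * X i a b) = (\<lambda>a b. \<Sum>i\<in>F. c i * omega m n g (X i) a b)"
proof (intro ext)
  fix a b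
  let ?C = "comps m n" and ?T = "tau m n g"
  have 1: "(\<Sum>f\<in>?C. ?T a f * (\<Sum>i\<in>F. c i * X i f e)) = (\<Sum>i\<in>F. c i * (\<Sum>f\<in>?C. ?T a f * X i f e))" for e
    by (simp add: sum_distrib_left sum.swap[of _ ?C] mult_ac)
  have "omega m n g (\<lambda>a b. \<Sum>i\<in>F. c i * X i a b) a b
      = (\<Sum>e\<in>?C. (\<Sum>i\<in>F. c i * (\<Sum>f\<in>?C. ?T a f * X i f e)) * cnj (?T b e))"
    unfolding omega_def op_mult_def op_adj_def using 1 by simp
  also have "\<dots> = (\<Sum>e\<in>?C. \<Sum>i\<in>F. c i * ((\<Sum>f\<in>?C. ?T a f * X i f e) * cnj (?T b e)))"
    by (simp add: sum_distrib_right mult.assoc)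
  also have "\<dots> = (\<Sum>i\<in>F. \<Sum>e\<in>?C. c i * ((\<Sum>f\<in>?C. ?T a f * X i f e) * cnj (?T b e)))"
    by (rule sum.swap)
  also have "\<dots> = (\<Sum>i\<in>F. c i * omega m n g (X i) a b)"
    unfolding omega_def op_mult_def op_adj_def by (simp add: sum_distrib_left)
  finally show "omega m n g (\<lambda>a b. \<Sum>i\<in>F. c i * X i a b) a b = (\<Sum>i\<in>F. c i * omega m n g (X i) a b)" .
qed
lemma GT_finite: "finite (GT m lm)"
proof -
  define K where "K = (\<Sum>i\<in>{1..m}. lm i)"
  define S2 where "S2 = {f::nat\<Rightarrow>nat. \<forall>j. (j \<in> {1..m} \<longrightarrow> f j \<in> {0..K}) \<and> (j \<notin> {1..m} \<longrightarrow> f j = 0)}"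
  have fS2: "finite S2" unfolding S2_def by (rule finite_set_of_finite_funs) auto
  have fS: "finite {M::gtpat. \<forall>i. (i \<in> {1..m} \<longrightarrow> M i \<in> S2) \<and> (i \<notin> {1..m} \<longrightarrow> M i = (\<lambda>_. 0))}"
    by (rule finite_set_of_finite_funs) (auto simp: fS2)
  have le: "M i j \<le> M i m" if "M \<in> GT m lm" "1 \<le> i" "i \<le> j" "j \<le> m" for M i j
  proof -
    have "\<forall>j. m - j = d \<and> i \<le> j \<and> j \<le> m \<longrightarrow> M i j \<le> M i m" for d
    proof (induction d)
      case 0 then show ?case by auto
    next
      case (Suc d)
      show ?case
      proof (intro allI impI)
        fix j assume h: "m - j = Suc d \<and> i \<le> j \<and> j \<le> m"
        then have h2: "m - (j+1) = d \<and> i \<le> j+1 \<and> j+1 \<le> m" by auto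
        have "M i (j+1) \<le> M i m" using Suc.IH h2 by blast
        moreover have "M i j \<le> M i (j+1)" using that(1) h \<open>1 \<le> i\<close> unfolding GT_def by auto
        ultimately show "M i j \<le> M i m" by simp
      qed
    qed
    then show ?thesis using that by blast
  qed
  have "GT m lm \<subseteq> {M::gtpat. \<forall>i. (i \<in> {1..m} \<longrightarrow> M i \<in> S2) \<and> (i \<notin> {1..m} \<longrightarrow> M i = (\<lambda>_. 0))}"
  proof (clarify, intro conjI impI)
    fix M i assume M: "M \<in> GT m lm"
    { assume i: "i \<in> {1..m}"
      show "M i \<in> S2" unfolding S2_def
      proof (intro CollectI allI conjI impI)
        fix j assume j: "j \<in> {1..m}"
        show "M i j \<in> {0..K}"
        proof (cases "i \<le> j")
          case True
          then have "M i j \<le> M i m" using le[OF M] i j by auto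
          also have "M i m = lm i" using M i unfolding GT_def by auto
          also have "lm i \<le> K" unfolding K_def by (rule member_le_sum) (use i in auto)
          finally show ?thesis by simp
        next
          case False then show ?thesis using M unfolding GT_def by auto
        qed
      next
        fix j assume "j \<notin> {1..m}" then show "M i j = 0" using M unfolding GT_def by auto
      qed }
    { assume "i \<notin> {1..m}" then show "M i = (\<lambda>_. 0)" using M unfolding GT_def by fastforce }
  qed
  then show ?thesis using fS by (rule finite_subset)
qed


lemma times_if01: "(x::complex) * (if P then 1 else 0) = (if P then x else 0)" by simp

lemma finite_comps: "finite (comps m n)"
proof -
  have "comps m n \<subseteq> {f. \<forall>x. (x \<in> {..<m} \<longrightarrow> f x \<in> {0..n}) \<and> (x \<notin> {..<m} \<longrightarrow> f x = 0)}"
  proof (clarify, intro conjI impI)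
    fix f x assume f: "f \<in> comps m n"
    { assume "x \<in> {..<m}"
      then have "f x \<le> (\<Sum>i<m. f i)" by (intro member_le_sum) auto
      then show "f x \<in> {0..n}" using f unfolding comps_def by auto }
    { assume "x \<notin> {..<m}" then show "f x = 0" using f unfolding comps_def by auto }
  qed
  moreover have "finite {f::nat\<Rightarrow>nat. \<forall>x. (x \<in> {..<m} \<longrightarrow> f x \<in> {0..n}) \<and> (x \<notin> {..<m} \<longrightarrow> f x = 0)}"
    by (rule finite_set_of_finite_funs) auto
  ultimately show ?thesis by (rule finite_subset)
qed

theorem corollaryT7:
  fixes m n k :: nat and v0 v :: fock and g :: "nat \<Rightarrow> nat \<Rightarrow> complex"
    and B :: "gtpat \<Rightarrow> op"
  assumes "m \<ge> 2" and "k \<le> n"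
    and "v0 \<in> comps m n" and "v \<in> comps m n"
    and "g \<in> SU m"
    and "GT_basis m n k B"
    and "s_lam m n k \<noteq> 0"
  shows "filt m n k v0 v g =
      (1 / s_lam m n k) * (-1) powi (phi m (Npat m v0) + phi m (Npat m v)) *
      (\<Sum>M\<in>GT m (lam m k). CG m B M v0 v0 *
         (\<Sum>M'\<in>GT m (lam m k). CG m B M' v v * lam_elem_adj m n B g M M'))
    \<and> filt m n k v0 v g =
      (1 / s_lam m n k) * (-1) powi (phi m (Npat m v0) + phi m (Npat m v)) *
      (\<Sum>M\<in>{M\<in>GT m (lam m k). zero_weight m M}. CG m B M v0 v0 *
         (\<Sum>M'\<in>{M'\<in>GT m (lam m k). zero_weight m M'}. CG m B M' v v * lam_elem_adj m n B g M M'))"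
proof -
  define F where "F = GT m (lam m k)"
  have finF: "finite F" unfolding F_def by (rule GT_finite)
  have Bin: "\<forall>M\<in>F. B M \<in> comp m n k"
    and orth: "\<forall>M\<in>F. \<forall>M'\<in>F. hs_inner m n (B M) (B M') = (if M = M' then 1 else 0)"
    and span: "op_span (B ` F) = comp m n k"
    and wt: "\<forall>M\<in>F. \<forall>a b. B M a b \<noteq> 0 \<longrightarrow> (\<forall>j<m. gt_weight M (j + 1) = int (a j) - int (b j) + int k)"
    and real: "\<forall>M\<in>F. \<forall>a b. B M a b \<in> \<real>"
    using assms(6) unfolding GT_basis_def F_def by blast+
  let ?U = "\<Union>{W. irreducible_inv m n W \<and> has_hw m n W (lam_wt0 m k)}"
  have comp_ops: "X a b = 0" if "X \<in> comp m n k" "a \<notin> comps m n \<or> b \<notin> comps m n" for X a b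
  proof -
    from that(1) obtain G c where G: "finite G" "G \<subseteq> ?U" and X: "X = (\<lambda>a b. \<Sum>Y\<in>G. c Y * Y a b)"
      unfolding comp_def op_span_def by blast
    have "Y a b = 0" if "Y \<in> G" for Y
    proof -
      from G(2) that obtain W where "irreducible_inv m n W" "Y \<in> W" by blast
      then have "Y \<in> ops m n" unfolding irreducible_inv_def invariant_def is_subsp_def by blast
      then show ?thesis using \<open>a \<notin> comps m n \<or> b \<notin> comps m n\<close> unfolding ops_def by blast
    qed
    then show ?thesis using X by (auto intro!: sum.neutral)
  qed
  have comp_inv: "omega m n g X \<in> comp m n k" if "X \<in> comp m n k" for X
  proof -
    from that obtain G c where G: "finite G" "G \<subseteq> ?U" and X: "X = (\<lambda>a b. \<Sum>Y\<in>G. c Y * Y a b)"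
      unfolding comp_def op_span_def by blast
    have om: "omega m n g Y \<in> ?U" if "Y \<in> G" for Y
    proof -
      from G(2) that obtain W where W: "irreducible_inv m n W" "has_hw m n W (lam_wt0 m k)" "Y \<in> W" by blast
      then have "omega m n g Y \<in> W" using assms(5) unfolding irreducible_inv_def invariant_def by blast
      then show ?thesis using W by blast
    qed
    define c' where "c' Z = (\<Sum>Y\<in>{Y\<in>G. omega m n g Y = Z}. c Y)" for Z
    have "omega m n g X = (\<lambda>a b. \<Sum>Y\<in>G. c Y * omega m n g Y a b)" unfolding X by (rule omega_lc)
    also have "\<dots> = (\<lambda>a b. \<Sum>Z\<in>omega m n g ` G. c' Z * Z a b)"
    proof (intro ext)
      fix a b
      have "(\<Sum>Y\<in>G. c Y * omega m n g Y a b)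
          = (\<Sum>Z\<in>omega m n g ` G. \<Sum>Y\<in>{Y\<in>G. omega m n g Y = Z}. c Y * omega m n g Y a b)"
        by (rule sum.image_gen[OF G(1)])
      also have "\<dots> = (\<Sum>Z\<in>omega m n g ` G. c' Z * Z a b)"
        unfolding c'_def sum_distrib_right by (intro sum.cong refl) auto
      finally show "(\<Sum>Y\<in>G. c Y * omega m n g Y a b) = (\<Sum>Z\<in>omega m n g ` G. c' Z * Z a b)" .
    qed
    finally have "omega m n g X = (\<lambda>a b. \<Sum>Z\<in>omega m n g ` G. c' Z * Z a b)" .
    moreover have "omega m n g ` G \<subseteq> ?U" using om by blast
    ultimately have "\<exists>F' cc. finite F' \<and> F' \<subseteq> ?U \<and> omega m n g X = (\<lambda>a b. \<Sum>Y\<in>F'. cc Y * Y a b)"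
      using G(1) by (intro exI[of _ "omega m n g ` G"] exI[of _ c']) simp
    then show ?thesis unfolding comp_def op_span_def by (simp only: mem_Collect_eq)
  qed
  have injB: "inj_on B F"
  proof (rule inj_onI)
    fix M M' assume h: "M \<in> F" "M' \<in> F" "B M = B M'"
    have "hs_inner m n (B M) (B M') = 1" using orth h by (metis)
    then show "M = M'" using orth h by (metis zero_neq_one)
  qed
  have expand: "Z = (\<lambda>a b. \<Sum>M\<in>F. hs_inner m n (B M) Z * B M a b)" if "Z \<in> comp m n k" for Z
  proof -
    from that obtain G c where G: "finite G" "G \<subseteq> B ` F" and Z: "Z = (\<lambda>a b. \<Sum>Y\<in>G. c Y * Y a b)"
      unfolding span[symmetric] op_span_def by blast
    have coef: "hs_inner m n (B M) Z = (if B M \<in> G then c (B M) else 0)" if M: "M \<in> F" for M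
    proof -
      have "hs_inner m n (B M) Z = (\<Sum>Y\<in>G. c Y * hs_inner m n (B M) Y)" unfolding Z by (rule hs_inner_lc_right)
      also have "\<dots> = (\<Sum>Y\<in>G. if Y = B M then c Y else 0)"
      proof (rule sum.cong[OF refl])
        fix Y assume "Y \<in> G"
        then obtain M' where M': "M' \<in> F" "Y = B M'" using G by blast
        show "c Y * hs_inner m n (B M) Y = (if Y = B M then c Y else 0)"
          using orth M M' inj_on_eq_iff[OF injB M' (1) M] by auto
      qed
      also have "\<dots> = (if B M \<in> G then c (B M) else 0)" using G(1) by simp
      finally show ?thesis .
    qed
    define H where "H = {M\<in>F. B M \<in> G}"
    have GH: "G = B ` H" using G(2) unfolding H_def by blast
    have injH: "inj_on B H" using injB unfolding H_def by (rule inj_on_subset) auto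
    show ?thesis
    proof (intro ext)
      fix a b
      have "(\<Sum>M\<in>F. hs_inner m n (B M) Z * B M a b) = (\<Sum>M\<in>F. if B M \<in> G then c (B M) * B M a b else 0)"
        by (intro sum.cong refl) (simp add: coef)
      also have "\<dots> = (\<Sum>M\<in>H. c (B M) * B M a b)" unfolding H_def using finF by (simp add: sum.inter_filter)
      also have "\<dots> = (\<Sum>Y\<in>G. c Y * Y a b)" unfolding GH by (simp add: sum.reindex[OF injH])
      finally show "Z a b = (\<Sum>M\<in>F. hs_inner m n (B M) Z * B M a b)" unfolding Z by simp
    qed
  qed
  define c where "c M = B M v0 v0" for M
  define d where "d M = B M v v" for M
  define Y where "Y = (\<lambda>a b. \<Sum>M\<in>F. c M * B M a b)"
  define E where "E = ketbra v0 v0"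
  have creal: "cnj (c M) = c M" if "M \<in> F" for M
    using real that unfolding c_def by (simp add: Reals_cnj_iff)
  have dreal: "cnj (d M) = d M" if "M \<in> F" for M
    using real that unfolding d_def by (simp add: Reals_cnj_iff)
  have hsE: "hs_inner m n (B M) E = cnj (c M)" for M
  proof -
    have inner: "(\<Sum>b\<in>comps m n. cnj (B M a b) * (if a = v0 \<and> b = v0 then 1 else 0))
        = (if a = v0 then cnj (B M v0 v0) else 0)" for a
      using assms(3) finite_comps by (cases "a = v0") (auto simp: times_if01)
    show ?thesis unfolding hs_inner_def E_def ketbra_def c_def inner
      using assms(3) finite_comps by simp
  qed
  have hsY: "hs_inner m n (B M) Y = c M" if M: "M \<in> F" for M
  proof -
    have "hs_inner m n (B M) Y = (\<Sum>M'\<in>F. c M' * hs_inner m n (B M) (B M'))" unfolding Y_def by (rule hs_inner_lc_right)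
    also have "\<dots> = (\<Sum>M'\<in>F. if M = M' then c M' else 0)" using orth M by (intro sum.cong refl) auto
    also have "\<dots> = c M" using finF M by simp
    finally show ?thesis .
  qed
  have Ycomp: "Y \<in> comp m n k"
  proof -
    have "Y = (\<lambda>a b. \<Sum>X\<in>B ` F. c (inv_into F B X) * X a b)"
      unfolding Y_def by (simp add: sum.reindex[OF injB] inv_into_f_f[OF injB])
    then have "\<exists>F' cc. finite F' \<and> F' \<subseteq> B ` F \<and> Y = (\<lambda>a b. \<Sum>X\<in>F'. cc X * X a b)"
      using finF by (intro exI[of _ "B ` F"] exI[of _ "\<lambda>X. c (inv_into F B X)"]) simp
    then show ?thesis unfolding span[symmetric] op_span_def by (simp only: mem_Collect_eq)
  qed
  have PE0: "P_lam m n k E = Y"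
    unfolding P_lam_def proj_def
  proof (rule the_equality)
    show "Y \<in> comp m n k \<and> (\<forall>Z\<in>comp m n k. hs_inner m n Z (\<lambda>a b. E a b - Y a b) = 0)"
    proof (intro conjI ballI Ycomp)
      fix Z assume Z: "Z \<in> comp m n k"
      have "hs_inner m n Z (\<lambda>a b. E a b - Y a b)
          = hs_inner m n (\<lambda>a b. \<Sum>M\<in>F. hs_inner m n (B M) Z * B M a b) (\<lambda>a b. E a b - Y a b)"
        by (rule arg_cong[OF expand[OF Z]])
      also have "\<dots> = (\<Sum>M\<in>F. cnj (hs_inner m n (B M) Z) * hs_inner m n (B M) (\<lambda>a b. E a b - Y a b))"
        by (rule hs_inner_lc_left)
      also have "\<dots> = 0"
        by (intro sum.neutral ballI) (simp add: hs_inner_diff hsE hsY creal)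
      finally show "hs_inner m n Z (\<lambda>a b. E a b - Y a b) = 0" .
    qed
  next
    fix Y' assume h: "Y' \<in> comp m n k \<and> (\<forall>Z\<in>comp m n k. hs_inner m n Z (\<lambda>a b. E a b - Y' a b) = 0)"
    have cY: "hs_inner m n (B M) Y' = c M" if M: "M \<in> F" for M
    proof -
      have "hs_inner m n (B M) (\<lambda>a b. E a b - Y' a b) = 0" using h Bin M by blast
      then show ?thesis using creal[OF M] by (simp add: hs_inner_diff hsE)
    qed
    have "Y' = (\<lambda>a b. \<Sum>M\<in>F. hs_inner m n (B M) Y' * B M a b)" using expand h by blast
    also have "\<dots> = Y" unfolding Y_def using cY by (intro ext sum.cong refl) simp
    finally show "Y' = Y" .
  qed
  define A where "A M' M = hs_inner m n (B M') (omega m n g (B M))" for M' M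
  have oY: "omega m n g Y = (\<lambda>a b. \<Sum>M\<in>F. c M * omega m n g (B M) a b)"
    unfolding Y_def by (rule omega_lc)
  have oYc: "omega m n g Y \<in> comp m n k" by (rule comp_inv[OF Ycomp])
  have val1: "omega m n g Y v v = (\<Sum>M'\<in>F. (\<Sum>M\<in>F. c M * A M' M) * d M')"
  proof -
    have "omega m n g Y v v = (\<Sum>M'\<in>F. hs_inner m n (B M') (omega m n g Y) * d M')"
      unfolding d_def by (subst expand[OF oYc]) (rule refl)
    also have "\<dots> = (\<Sum>M'\<in>F. (\<Sum>M\<in>F. c M * A M' M) * d M')"
      unfolding oY A_def by (simp add: hs_inner_lc_right)
    finally show ?thesis .
  qed
  have Ydiag: "Y a b = 0" if ab: "a \<noteq> b" for a b
    unfolding Y_def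
  proof (rule sum.neutral, rule ballI)
    fix M assume M: "M \<in> F"
    show "c M * B M a b = 0"
    proof (rule ccontr)
      assume "c M * B M a b \<noteq> 0"
      then have c0: "B M v0 v0 \<noteq> 0" and b0: "B M a b \<noteq> 0" unfolding c_def by auto
      have w1: "\<forall>j<m. gt_weight M (j + 1) = int k" using wt M c0 by fastforce
      have w2: "\<forall>j<m. gt_weight M (j + 1) = int (a j) - int (b j) + int k" using wt M b0 by blast
      have ca: "a \<in> comps m n" "b \<in> comps m n" using comp_ops[OF Bin[rule_format, OF M]] b0 by blast+
      have "a j = b j" for j
      proof (cases "j < m")
        case True then show ?thesis using w1 w2 by force
      next
        case False then show ?thesis using ca unfolding comps_def by auto
      qed
      then show False using ab by blast
    qed
  qed
  have Yreal: "cnj (Y a a) = Y a a" for a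
    unfolding Y_def using real by (simp add: c_def Reals_cnj_iff)
  let ?T = "tau m n g" and ?C = "comps m n"
  have val2: "omega m n g Y v v = (\<Sum>e\<in>?C. ?T v e * Y e e * cnj (?T v e))"
  proof -
    have inner: "(\<Sum>f\<in>?C. ?T v f * Y f e) = ?T v e * Y e e" if e: "e \<in> ?C" for e
    proof -
      have "(\<Sum>f\<in>?C. ?T v f * Y f e) = (\<Sum>f\<in>?C. if f = e then ?T v e * Y e e else 0)"
        by (intro sum.cong refl) (auto simp: Ydiag)
      also have "\<dots> = ?T v e * Y e e" using e finite_comps by simp
      finally show ?thesis .
    qed
    show ?thesis unfolding omega_def op_mult_def op_adj_def by (simp add: inner)
  qed
  have val_real: "cnj (omega m n g Y v v) = omega m n g Y v v"
    unfolding val2 by (simp add: Yreal mult_ac)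
  define S where "S = (\<Sum>M\<in>F. c M * (\<Sum>M'\<in>F. d M' * cnj (A M' M)))"
  have S_eq: "S = omega m n g Y v v"
  proof -
    have "S = (\<Sum>M\<in>F. \<Sum>M'\<in>F. cnj (c M * A M' M * d M'))"
      unfolding S_def sum_distrib_left by (intro sum.cong refl) (simp add: creal dreal)
    also have "\<dots> = (\<Sum>M'\<in>F. \<Sum>M\<in>F. cnj (c M * A M' M * d M'))" by (rule sum.swap)
    also have "\<dots> = cnj (\<Sum>M'\<in>F. (\<Sum>M\<in>F. c M * A M' M) * d M')"
      by (simp add: sum_distrib_right)
    also have "\<dots> = omega m n g Y v v" using val1 val_real by simp
    finally show ?thesis .
  qed
  have filt_eq: "filt m n k v0 v g = (1 / s_lam m n k) * S"
    unfolding filt_def S_eq using PE0 unfolding E_def by simp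
  define s0 where "s0 = (-1::complex) powi phi m (Npat m v0)"
  define s1 where "s1 = (-1::complex) powi phi m (Npat m v)"
  have CG0: "CG m B M v0 v0 = s0 * c M" for M unfolding CG_def s0_def c_def by simp
  have CG1: "CG m B M v v = s1 * d M" for M unfolding CG_def s1_def d_def by simp
  have LA: "lam_elem_adj m n B g M M' = cnj (A M' M)" for M M' unfolding lam_elem_adj_def A_def by simp
  have sgn: "(-1) powi (phi m (Npat m v0) + phi m (Npat m v)) * s0 * s1 = 1"
    unfolding s0_def s1_def by (rule sign_sq)
  have RHS: "(\<Sum>M\<in>F. CG m B M v0 v0 * (\<Sum>M'\<in>F. CG m B M' v v * lam_elem_adj m n B g M M')) = s0 * s1 * S"
    unfolding CG0 CG1 LA S_def by (simp add: sum_distrib_left mult_ac)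
  have eq1: "filt m n k v0 v g =
      (1 / s_lam m n k) * (-1) powi (phi m (Npat m v0) + phi m (Npat m v)) *
      (\<Sum>M\<in>F. CG m B M v0 v0 * (\<Sum>M'\<in>F. CG m B M' v v * lam_elem_adj m n B g M M'))"
  proof -
    have "(1 / s_lam m n k) * (-1) powi (phi m (Npat m v0) + phi m (Npat m v)) * (s0 * s1 * S)
        = (1 / s_lam m n k) * ((-1) powi (phi m (Npat m v0) + phi m (Npat m v)) * s0 * s1) * S"
      by (simp add: mult_ac)
    then show ?thesis unfolding RHS filt_eq sgn by simp
  qed
  have zw: "zero_weight m M" if M: "M \<in> F" and nz: "B M w w \<noteq> 0" for M w
  proof -
    have w1: "\<forall>j<m. gt_weight M (j + 1) = int k" using wt M nz by fastforce
    show ?thesis unfolding zero_weight_def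
    proof
      fix j assume j: "j \<in> {1..m}"
      obtain j' where j': "j = j' + 1" "j' < m" using j by (intro that[of "j - 1"]) auto
      have "gt_weight M j = int k" using w1 j' by simp
      moreover have "gt_weight M 1 = int k" using w1[rule_format, of 0] assms(1) by simp
      ultimately show "gt_weight M j = gt_weight M 1" by simp
    qed
  qed
  let ?Z = "{M\<in>F. zero_weight m M}"
  have inner_eq: "(\<Sum>M'\<in>?Z. CG m B M' v v * lam_elem_adj m n B g M M') = (\<Sum>M'\<in>F. CG m B M' v v * lam_elem_adj m n B g M M')" for M
    by (rule sum.mono_neutral_left[OF finF]) (auto simp: CG1 d_def dest: zw)
  have outer_eq: "(\<Sum>M\<in>?Z. CG m B M v0 v0 * (\<Sum>M'\<in>F. CG m B M' v v * lam_elem_adj m n B g M M'))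
      = (\<Sum>M\<in>F. CG m B M v0 v0 * (\<Sum>M'\<in>F. CG m B M' v v * lam_elem_adj m n B g M M'))"
    by (rule sum.mono_neutral_left[OF finF]) (auto simp: CG0 c_def dest: zw)
  show ?thesis using eq1 unfolding F_def[symmetric] inner_eq outer_eq by simp
qed

end
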